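(* Let $J_1$ be the graph with vertex set $\{a,b,c,d,e\}$ and edge set $\{ab,ac,bc,ae,be,cd,de,ad\}$, and let $J_2$ be the graph with the same vertex set and edge set $\{ab,ac,bc,ae,be,cd,de,bd\}$. Let $G$ be any graph obtained by taking six graphs $Q_1,\dots,Q_6$, each isomorphic to $J_1$ or to $J_2$ (the choice may differ for different $i$), pairwise vertex-disjoint, and identifying the copies of the edge $ab$ (vertex $a$ of each copy identified to a single vertex $a$, vertex $b$ of each copy identified to a single vertex $b$), the remaining vertices staying distinct. Then $G$ is not $3$-choosable.
   Context: A graph $G$ is $k$-choosable if for every assignment $L$ of a set $L(v)$ of $k$ colours to each vertex $v$, there is a proper colouring $\phi$ of $G$ with $\phi(v)\in L(v)$ for all $v$. In the paper, the edge $ab$ of $J_1$, $J_2$ and of $G$ is called the handle; the class of all graphs $G$ so obtained is denoted $\mathcal{J}$. *)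

theory Defs
  imports Main
begin

definition adj :: "('v \<times> 'v) set \<Rightarrow> 'v \<Rightarrow> 'v \<Rightarrow> bool" where
  "adj E u v \<longleftrightarrow> (u, v) \<in> E \<or> (v, u) \<in> E"

definition choosable :: "'v set \<Rightarrow> ('v \<times> 'v) set \<Rightarrow> nat \<Rightarrow> bool" where
  "choosable V E k \<longleftrightarrow>
     (\<forall>L :: 'v \<Rightarrow> nat set. (\<forall>v\<in>V. finite (L v) \<and> card (L v) = k) \<longrightarrow>
        (\<exists>\<phi> :: 'v \<Rightarrow> nat. (\<forall>v\<in>V. \<phi> v \<in> L v) \<and>
            (\<forall>u\<in>V. \<forall>v\<in>V. adj E u v \<longrightarrow> \<phi> u \<noteq> \<phi> v)))"

datatype lab = a | b | c | d | e

definition J1_edges :: "(lab \<times> lab) set" where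
  "J1_edges = {(a,b),(a,c),(b,c),(a,e),(b,e),(c,d),(d,e),(a,d)}"

definition J2_edges :: "(lab \<times> lab) set" where
  "J2_edges = {(a,b),(a,c),(b,c),(a,e),(b,e),(c,d),(d,e),(b,d)}"

text \<open>Vertices of the glued graph: the shared handle vertices a and b, and
  the private vertices c, d, e of copy i.\<close>
datatype gv = Ha | Hb | Cp nat lab

definition embed :: "nat \<Rightarrow> lab \<Rightarrow> gv" where
  "embed i x = (if x = a then Ha else if x = b then Hb else Cp i x)"

text \<open>s i = True means copy Q_i is J1, s i = False means Q_i is J2.\<close>
definition glued_V :: "gv set" where
  "glued_V = {embed i x | i x. i < 6}"

definition glued_E :: "(nat \<Rightarrow> bool) \<Rightarrow> (gv \<times> gv) set" where
  "glued_E s = {(embed i x, embed i y) | i x y.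
                  i < 6 \<and> (x, y) \<in> (if s i then J1_edges else J2_edges)}"

end

theory Submission
  imports Defs
begin

definition al :: "nat \<Rightarrow> nat" where "al i = [1,1,2,2,3,3] ! i"
definition be :: "nat \<Rightarrow> nat" where "be i = [2,3,1,3,1,2] ! i"

lemma six: "i < (6::nat) \<Longrightarrow> i = 0 \<or> i = 1 \<or> i = 2 \<or> i = 3 \<or> i = 4 \<or> i = 5"
  by auto

lemma albe: "i < 6 \<Longrightarrow> al i \<in> {1,2,3} \<and> be i \<in> {1,2,3} \<and> al i \<noteq> be i"
  using six[of i] by (auto simp: al_def be_def)

lemma ex6: "P 0 \<or> P 1 \<or> P 2 \<or> P 3 \<or> P 4 \<or> P 5 \<Longrightarrow> \<exists>i<(6::nat). P i"
proof -
  assume h: "P 0 \<or> P 1 \<or> P 2 \<or> P 3 \<or> P 4 \<or> P 5"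
  have "(0::nat) < 6" "(1::nat) < 6" "(2::nat) < 6" "(3::nat) < 6" "(4::nat) < 6" "(5::nat) < 6" by simp_all
  then show ?thesis using h by blast
qed

lemma pick: "x \<in> {1,2,3::nat} \<Longrightarrow> y \<in> {1,2,3} \<Longrightarrow> x \<noteq> y \<Longrightarrow> \<exists>i<6. al i = x \<and> be i = y"
  apply (rule ex6)
  apply (simp add: al_def be_def)
  apply auto
  done

lemma inV: "i < 6 \<Longrightarrow> embed i x \<in> glued_V"
  unfolding glued_V_def by blast

lemma inE: "i < 6 \<Longrightarrow> (x, y) \<in> (if s i then J1_edges else J2_edges) \<Longrightarrow> (embed i x, embed i y) \<in> glued_E s"
  unfolding glued_E_def by blast

definition LL :: "(nat \<Rightarrow> bool) \<Rightarrow> gv \<Rightarrow> nat set" where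
  "LL s v = (case v of Ha \<Rightarrow> {1,2,3} | Hb \<Rightarrow> {1,2,3}
     | Cp i x \<Rightarrow> (if x = c then {al i, be i, 4} else if x = e then {al i, be i, 5}
                  else if x = d then {if s i then al i else be i, 4, 5} else {1,2,3}))"

lemma c3: "(p::nat) \<noteq> q \<Longrightarrow> p \<noteq> r \<Longrightarrow> q \<noteq> r \<Longrightarrow> finite {p,q,r} \<and> card {p,q,r} = 3"
  by simp

lemma card3: "v \<in> glued_V \<Longrightarrow> finite (LL s v) \<and> card (LL s v) = 3"
proof -
  assume "v \<in> glued_V"
  then obtain i x where i: "i < 6" and v: "v = embed i x" unfolding glued_V_def by blast
  have A: "al i \<in> {1,2,3}" "be i \<in> {1,2,3}" "al i \<noteq> be i" using albe[OF i] by auto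
  have n4: "al i \<noteq> 4" "be i \<noteq> 4" "al i \<noteq> 5" "be i \<noteq> 5" using A(1,2) by auto
  show ?thesis
  proof (cases x)
    case a then show ?thesis unfolding v embed_def LL_def by simp
  next
    case b then show ?thesis unfolding v embed_def LL_def by simp
  next
    case c then show ?thesis unfolding v embed_def LL_def using c3[OF A(3) n4(1) n4(2)] by simp
  next
    case e then show ?thesis unfolding v embed_def LL_def using c3[OF A(3) n4(3) n4(4)] by simp
  next
    case d
    have "finite {if s i then al i else be i, 4, 5} \<and> card {if s i then al i else be i, 4, 5} = (3::nat)"
      using c3[of "if s i then al i else be i" 4 5] n4 by (cases "s i") auto
    then show ?thesis unfolding v embed_def LL_def d by simp
  qed
qed

theorem lemma2:
  fixes s :: "nat \<Rightarrow> bool"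
  shows "\<not> choosable glued_V (glued_E s) 3"
proof
  assume ch: "choosable glued_V (glued_E s) 3"
  have h: "(\<forall>v\<in>glued_V. finite (LL s v) \<and> card (LL s v) = 3) \<longrightarrow>
        (\<exists>\<phi> :: gv \<Rightarrow> nat. (\<forall>v\<in>glued_V. \<phi> v \<in> LL s v) \<and>
            (\<forall>u\<in>glued_V. \<forall>v\<in>glued_V. adj (glued_E s) u v \<longrightarrow> \<phi> u \<noteq> \<phi> v))"
    using ch unfolding choosable_def by (rule spec)
  have cc: "\<forall>v\<in>glued_V. finite (LL s v) \<and> card (LL s v) = 3" using card3 by blast
  obtain \<phi> :: "gv \<Rightarrow> nat" where ph: "\<forall>v\<in>glued_V. \<phi> v \<in> LL s v"
     and pr: "\<forall>u\<in>glued_V. \<forall>v\<in>glued_V. adj (glued_E s) u v \<longrightarrow> \<phi> u \<noteq> \<phi> v"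
    using mp[OF h cc] by blast
  have ed: "\<phi> (embed i x) \<noteq> \<phi> (embed i y)" if "i < 6" "(x, y) \<in> (if s i then J1_edges else J2_edges)" for i x y
  proof -
    have "adj (glued_E s) (embed i x) (embed i y)" using inE[of i x y s, OF that] unfolding adj_def by blast
    then show ?thesis using pr inV[OF that(1)] by blast
  qed
  have bothE: "(x, y) \<in> (if s i then J1_edges else J2_edges)"
    if "(x,y) \<in> {(a,b),(a,c),(b,c),(a,e),(b,e),(c,d),(d,e)}" for x y i
    using that by (cases "s i") (auto simp: J1_edges_def J2_edges_def)
  have phv: "\<phi> (embed i x) \<in> LL s (embed i x)" if "i < 6" for i x using ph inV[OF that] by blast
  have Ha: "\<phi> Ha \<in> {1,2,3}" using phv[of 0 a] by (simp add: embed_def LL_def)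
  have Hb: "\<phi> Hb \<in> {1,2,3}" using phv[of 0 b] by (simp add: embed_def LL_def)
  have ne: "\<phi> Ha \<noteq> \<phi> Hb" using ed[of 0 a b] bothE[of a b 0] by (simp add: embed_def)
  obtain i where i: "i < 6" and ai: "al i = \<phi> Ha" and bi: "be i = \<phi> Hb"
    using pick[OF Ha Hb ne] by blast
  have C: "\<phi> (Cp i c) \<in> {al i, be i, 4}" using phv[OF i, of c] by (simp add: embed_def LL_def)
  have E: "\<phi> (Cp i e) \<in> {al i, be i, 5}" using phv[OF i, of e] by (simp add: embed_def LL_def)
  have D: "\<phi> (Cp i d) \<in> {if s i then al i else be i, 4, 5}" using phv[OF i, of d] by (simp add: embed_def LL_def)
  have f1: "\<phi> (Cp i c) \<noteq> \<phi> Ha" using ed[OF i bothE[of a c]] by (simp add: embed_def)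
  have f2: "\<phi> (Cp i c) \<noteq> \<phi> Hb" using ed[OF i bothE[of b c]] by (simp add: embed_def)
  have f3: "\<phi> (Cp i e) \<noteq> \<phi> Ha" using ed[OF i bothE[of a e]] by (simp add: embed_def)
  have f4: "\<phi> (Cp i e) \<noteq> \<phi> Hb" using ed[OF i bothE[of b e]] by (simp add: embed_def)
  have f5: "\<phi> (Cp i c) \<noteq> \<phi> (Cp i d)" using ed[OF i bothE[of c d]] by (simp add: embed_def)
  have f6: "\<phi> (Cp i d) \<noteq> \<phi> (Cp i e)" using ed[OF i bothE[of d e]] by (simp add: embed_def)
  have c4: "\<phi> (Cp i c) = 4" using C f1 f2 ai bi by auto
  have e5: "\<phi> (Cp i e) = 5" using E f3 f4 ai bi by auto
  show False
  proof (cases "s i")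
    case True
    have "\<phi> (Cp i d) \<noteq> \<phi> Ha" using ed[OF i, of a d] True by (simp add: embed_def J1_edges_def)
    then show False using D True c4 e5 f5 f6 ai by auto
  next
    case False
    have "\<phi> (Cp i d) \<noteq> \<phi> Hb" using ed[OF i, of b d] False by (simp add: embed_def J2_edges_def)
    then show False using D False c4 e5 f5 f6 bi by auto
  qed
qed

end
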